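(* For $p\in(0,1)$ and $N\ge2$, $\bar A_p\ge\min(1,c(p))$, where $$U(p):=\min_{r\in[2,\infty)}\frac{1}{r\,\bigl|\log\bigl(1-(1-p)^{r-1}\bigr)\bigr|},\qquad c(p):=\min_{w\in[0,\infty)}\bigl(U(p)\,w+(1-p)e^{-w}\bigr).$$
   Context: $\log$ is the natural logarithm, $q:=1-p$, $0^0=1$. $\bar A_p:=\min_{\vec m\in\{0,1,\dots,N\}^N}A_p(\vec m)$ where $A_p(\vec m):=\sum_{i=1}^N m_i/i+q\,0^{m_1}\exp(-\sum_{i=2}^N m_i a^i_p)$ and $a^i_p:=|\log(1-(1-p)^{i-1})|$. *)

theory Defs
  imports Complex_Main
begin

definition a_coef :: "real \<Rightarrow> nat \<Rightarrow> real" where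
  "a_coef p i = \<bar>ln (1 - (1 - p) ^ (i - 1))\<bar>"

definition A_fun :: "real \<Rightarrow> nat \<Rightarrow> (nat \<Rightarrow> nat) \<Rightarrow> real" where
  "A_fun p N m = (\<Sum>i=1..N. real (m i) / real i)
     + (1 - p) * (0::real) ^ (m 1) * exp (- (\<Sum>i=2..N. real (m i) * a_coef p i))"

definition admissible :: "nat \<Rightarrow> (nat \<Rightarrow> nat) set" where
  "admissible N = {m. (\<forall>i\<in>{1..N}. m i \<le> N) \<and> (\<forall>i. i \<notin> {1..N} \<longrightarrow> m i = 0)}"

definition A_bar :: "real \<Rightarrow> nat \<Rightarrow> real" where
  "A_bar p N = Min (A_fun p N ` admissible N)"

definition U_fun :: "real \<Rightarrow> real" where
  "U_fun p = (INF r\<in>{2..}. 1 / (r * \<bar>ln (1 - (1 - p) powr (r - 1))\<bar>))"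

definition c_fun :: "real \<Rightarrow> real" where
  "c_fun p = (INF w\<in>{0..}. U_fun p * w + (1 - p) * exp (- w))"

end

theory Submission
  imports Defs "HOL-Library.FuncSet"
begin

lemma a_pos:
  assumes "0 < p" "p < 1" "i \<ge> 2"
  shows "a_coef p i > 0"
proof -
  have q: "0 < 1 - p" "1 - p < 1" using assms by auto
  have "(1 - p) ^ (i - 1) < 1" using q assms by (simp add: power_less_one_iff)
  moreover have "(1 - p) ^ (i - 1) > 0" using q by simp
  ultimately have "ln (1 - (1 - p) ^ (i - 1)) < 0" by simp
  thus ?thesis unfolding a_coef_def by simp
qed

lemma U_nonneg: "U_fun p \<ge> 0"
  unfolding U_fun_def
  by (rule cINF_greatest) auto

lemma U_le:
  assumes "0 < p" "p < 1" "i \<ge> 2"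
  shows "U_fun p \<le> 1 / (real i * a_coef p i)"
proof -
  have "(1 - p) powr (real i - 1) = (1 - p) ^ (i - 1)"
    using assms by (simp add: powr_realpow[symmetric] of_nat_diff)
  hence eq: "1 / (real i * \<bar>ln (1 - (1 - p) powr (real i - 1))\<bar>) = 1 / (real i * a_coef p i)"
    by (simp add: a_coef_def)
  have "U_fun p \<le> 1 / (real i * \<bar>ln (1 - (1 - p) powr (real i - 1))\<bar>)"
    unfolding U_fun_def
    by (rule cINF_lower) (auto intro!: bdd_belowI[where m=0] simp: assms)
  thus ?thesis using eq by simp
qed

lemma c_le:
  assumes "0 < p" "p < 1" "w \<ge> 0"
  shows "c_fun p \<le> U_fun p * w + (1 - p) * exp (- w)"
  unfolding c_fun_def
  apply (rule cINF_lower)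
   apply (rule bdd_belowI[where m=0])
  using U_nonneg[of p] assms by auto

lemma adm_finite: "finite (admissible N)"
proof -
  have "(\<lambda>m. restrict m {1..N}) ` admissible N \<subseteq> PiE {1..N} (\<lambda>_. {0..N})"
    by (auto simp: admissible_def)
  hence "finite ((\<lambda>m. restrict m {1..N}) ` admissible N)"
    by (rule finite_subset) (auto intro: finite_PiE)
  moreover have "inj_on (\<lambda>m. restrict m {1..N}) (admissible N)"
  proof (rule inj_onI)
    fix x y assume x: "x \<in> admissible N" and y: "y \<in> admissible N"
      and e: "restrict x {1..N} = restrict y {1..N}"
    show "x = y"
    proof
      fix i show "x i = y i"
      proof (cases "i \<in> {1..N}")
        case True thus ?thesis using fun_cong[OF e, of i] by simp
      next
        case False thus ?thesis using x y by (auto simp: admissible_def)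
      qed
    qed
  qed
  ultimately show ?thesis by (rule finite_imageD)
qed

lemma A_ge:
  assumes "0 < p" "p < 1" "N \<ge> 2"
  shows "A_fun p N m \<ge> min 1 (c_fun p)"
proof (cases "m 1 = 0")
  case False
  have "(\<Sum>i=1..N. real (m i) / real i) \<ge> real (m 1) / real 1"
    by (rule member_le_sum) (use assms in auto)
  hence s: "(\<Sum>i=1..N. real (m i) / real i) \<ge> 1" using False by simp
  have "(1 - p) * (0::real) ^ (m 1) * exp (- (\<Sum>i=2..N. real (m i) * a_coef p i)) = 0"
    using False by simp
  hence "A_fun p N m = (\<Sum>i=1..N. real (m i) / real i)" unfolding A_fun_def by simp
  thus ?thesis using s by (simp add: min.coboundedI1)
next
  case True
  define w where "w = (\<Sum>i=2..N. real (m i) * a_coef p i)"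
  have w0: "w \<ge> 0" unfolding w_def
  proof (rule sum_nonneg)
    fix i assume "i \<in> {2..N}"
    hence "a_coef p i > 0" using a_pos[OF assms(1,2)] by simp
    thus "0 \<le> real (m i) * a_coef p i" by simp
  qed
  have split: "(\<Sum>i=1..N. real (m i) / real i) = real (m 1) / 1 + (\<Sum>i=2..N. real (m i) / real i)"
    using assms(3) by (simp add: sum.atLeast_Suc_atMost numeral_2_eq_2)
  have "U_fun p * w = (\<Sum>i=2..N. U_fun p * (real (m i) * a_coef p i))"
    unfolding w_def by (simp add: sum_distrib_left)
  also have "\<dots> \<le> (\<Sum>i=2..N. real (m i) / real i)"
  proof (rule sum_mono)
    fix i assume "i \<in> {2..N}"
    hence i: "i \<ge> 2" by simp
    have ap: "a_coef p i > 0" using a_pos[OF assms(1,2) i] .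
    have "U_fun p * a_coef p i \<le> 1 / (real i * a_coef p i) * a_coef p i"
      using U_le[OF assms(1,2) i] ap by (intro mult_right_mono) auto
    also have "\<dots> = 1 / real i" using ap i by simp
    finally have "real (m i) * (U_fun p * a_coef p i) \<le> real (m i) * (1 / real i)"
      by (intro mult_left_mono) auto
    thus "U_fun p * (real (m i) * a_coef p i) \<le> real (m i) / real i"
      by (simp add: algebra_simps)
  qed
  finally have le: "U_fun p * w \<le> (\<Sum>i=2..N. real (m i) / real i)" .
  have "A_fun p N m = (\<Sum>i=2..N. real (m i) / real i) + (1 - p) * exp (- w)"
    unfolding A_fun_def split w_def using True by simp
  hence "A_fun p N m \<ge> U_fun p * w + (1 - p) * exp (- w)" using le by simp
  moreover have "c_fun p \<le> U_fun p * w + (1 - p) * exp (- w)"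
    using c_le[OF assms(1,2) w0] .
  ultimately show ?thesis by linarith
qed

theorem lemma3:
  fixes p :: real and N :: nat
  assumes "0 < p" "p < 1" "N \<ge> 2"
  shows "A_bar p N \<ge> min 1 (c_fun p)"
proof -
  have ne: "(\<lambda>_. 0) \<in> admissible N" by (simp add: admissible_def)
  show ?thesis unfolding A_bar_def
    using adm_finite[of N] ne A_ge[OF assms]
    by (subst Min_ge_iff) auto
qed

end
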